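(* Let $h,n\geq 2$ and let $V<S_h$ be a proper subgroup such that there exists a preference profile $p\in\mathcal{P}$ with $\mathrm{Stab}_{S_h\times\{id\}}(p)\leq V\times\{id\}$. Then $V\times\{id\}$ is an anonymity group with respect to $(h,n)$.
   Context: Permutations compose as $(\sigma\tau)(x)=\sigma(\tau(x))$. Let $H=[h]$, $G=S_h\times S_n$, and $\mathcal{P}=(S_n)^h$ (preference profiles, linear orders on $[n]$ being identified with elements of $S_n$). $G$ acts on $\mathcal{P}$ by $(p^{(\varphi,\psi)})_i=\psi\,p_{\varphi^{-1}(i)}$; for $U\leq G$, $\mathrm{Stab}_U(p)=\{g\in U:p^g=p\}$. A social preference function (SPF) is any function $F:\mathcal{P}\to S_n$. Its symmetry group is $G(F)=\{(\varphi,\psi)\in G: F(p^{(\varphi,\psi)})=\psi F(p)\ \forall p\}$ and its anonymity group is $G_1(F)=G(F)\cap(S_h\times\{id\})$. A subgroup $U\leq S_h\times\{id\}$ is an anonymity group with respect to $(h,n)$ if $U=G_1(F)$ for some SPF $F$. *)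

theory Defs
  imports "HOL-Algebra.Sym_Groups"
begin

text \<open>Permutations of [m] = {1..m} are functions nat => nat with p permutes {1..m}
  (carrier of sym_group m). A preference profile is a function from voters [h]
  to S_n, extended by id outside [h].\<close>

type_synonym profile = "nat \<Rightarrow> (nat \<Rightarrow> nat)"

definition profiles :: "nat \<Rightarrow> nat \<Rightarrow> profile set" where
  "profiles h n = {p. (\<forall>i\<in>{1..h}. p i permutes {1..n}) \<and> (\<forall>i. i \<notin> {1..h} \<longrightarrow> p i = id)}"

definition act :: "nat \<Rightarrow> (nat \<Rightarrow> nat) \<Rightarrow> (nat \<Rightarrow> nat) \<Rightarrow> profile \<Rightarrow> profile" where
  "act h \<phi> \<psi> p = (\<lambda>i. if i \<in> {1..h} then \<psi> \<circ> p (Hilbert_Choice.inv \<phi> i) else id)"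

definition Stab :: "nat \<Rightarrow> ((nat \<Rightarrow> nat) \<times> (nat \<Rightarrow> nat)) set \<Rightarrow> profile \<Rightarrow> ((nat \<Rightarrow> nat) \<times> (nat \<Rightarrow> nat)) set" where
  "Stab h U p = {g \<in> U. act h (fst g) (snd g) p = p}"

text \<open>An SPF is a map from profiles to S_n (values outside profiles are irrelevant).\<close>
definition is_SPF :: "nat \<Rightarrow> nat \<Rightarrow> (profile \<Rightarrow> (nat \<Rightarrow> nat)) \<Rightarrow> bool" where
  "is_SPF h n F \<longleftrightarrow> (\<forall>p\<in>profiles h n. F p permutes {1..n})"

definition symmetry_group :: "nat \<Rightarrow> nat \<Rightarrow> (profile \<Rightarrow> (nat \<Rightarrow> nat)) \<Rightarrow> ((nat \<Rightarrow> nat) \<times> (nat \<Rightarrow> nat)) set" where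
  "symmetry_group h n F = {(\<phi>, \<psi>). \<phi> \<in> carrier (sym_group h) \<and> \<psi> \<in> carrier (sym_group n) \<and>
      (\<forall>p\<in>profiles h n. F (act h \<phi> \<psi> p) = \<psi> \<circ> F p)}"

definition anonymity_group_of :: "nat \<Rightarrow> nat \<Rightarrow> (profile \<Rightarrow> (nat \<Rightarrow> nat)) \<Rightarrow> ((nat \<Rightarrow> nat) \<times> (nat \<Rightarrow> nat)) set" where
  "anonymity_group_of h n F = symmetry_group h n F \<inter> (carrier (sym_group h) \<times> {id})"

definition is_anonymity_group :: "nat \<Rightarrow> nat \<Rightarrow> ((nat \<Rightarrow> nat) \<times> (nat \<Rightarrow> nat)) set \<Rightarrow> bool" where
  "is_anonymity_group h n U \<longleftrightarrow>
      (\<exists>F. is_SPF h n F \<and> U = anonymity_group_of h n F)"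

end

theory Submission
  imports Defs
begin

lemma act_comp:
  assumes "\<phi> permutes {1..h}" "\<sigma> permutes {1..h}"
  shows "act h \<phi> id (act h \<sigma> id p) = act h (\<phi> \<circ> \<sigma>) id p"
proof -
  have bp: "bij \<phi>" "bij \<sigma>" using assms permutes_bij by auto
  have inv_c: "inv' (\<phi> \<circ> \<sigma>) = inv' \<sigma> \<circ> inv' \<phi>" using bp o_inv_distrib by blast
  have "inv' \<phi> i \<in> {1..h}" if "i \<in> {1..h}" for i
    using assms(1) that permutes_inv permutes_in_image by metis
  then show ?thesis unfolding act_def by (auto simp: inv_c)
qed

lemma act_id:
  assumes "p \<in> profiles h n" shows "act h id id p = p"
  using assms unfolding act_def profiles_def by (auto simp: inv_id)

lemma act_prof:
  assumes "\<phi> permutes {1..h}" "p \<in> profiles h n" shows "act h \<phi> id p \<in> profiles h n"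
proof -
  have "inv' \<phi> i \<in> {1..h}" if "i \<in> {1..h}" for i
    using assms(1) that permutes_inv permutes_in_image by metis
  then show ?thesis using assms(2) unfolding act_def profiles_def by auto
qed

theorem mainTheorem2:
  fixes h n :: nat and V :: "(nat \<Rightarrow> nat) set"
  assumes "h \<ge> 2" and "n \<ge> 2"
    and "subgroup V (sym_group h)"
    and "V \<noteq> carrier (sym_group h)"
    and "\<exists>p\<in>profiles h n. Stab h (carrier (sym_group h) \<times> {id}) p \<subseteq> V \<times> {id}"
  shows "is_anonymity_group h n (V \<times> {id})"
proof -
  obtain p0 where p0: "p0 \<in> profiles h n"
    and st: "Stab h (carrier (sym_group h) \<times> {id}) p0 \<subseteq> V \<times> {id}" using assms(5) by blast
  interpret G: group "sym_group h" by (rule sym_group_is_group)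
  have Vsub: "\<And>x. x \<in> V \<Longrightarrow> x permutes {1..h}"
    using subgroup.subset[OF assms(3)] sym_group_carrier by blast
  have Vmul: "\<And>x y. x \<in> V \<Longrightarrow> y \<in> V \<Longrightarrow> x \<circ> y \<in> V"
    using subgroup.m_closed[OF assms(3)] sym_group_mult by metis
  have Vinv: "\<And>x. x \<in> V \<Longrightarrow> inv' x \<in> V"
  proof -
    fix x assume x: "x \<in> V"
    have "inv\<^bsub>sym_group h\<^esub> x \<in> V" using subgroup.m_inv_closed[OF assms(3) x] .
    moreover have "x \<in> carrier (sym_group h)" using x subgroup.subset[OF assms(3)] by blast
    ultimately show "inv' x \<in> V" by simp
  qed
  define \<tau> :: "nat \<Rightarrow> nat" where "\<tau> = Transposition.transpose 1 2"
  have tperm: "\<tau> permutes {1..n}" unfolding \<tau>_def using assms(2)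
    by (intro permutes_swap_id) auto
  have "\<tau> 1 = 2" unfolding \<tau>_def by simp
  then have tne: "\<tau> \<noteq> id" by auto
  define A where "A = {q. \<exists>\<sigma>\<in>V. q = act h \<sigma> id p0}"
  define F :: "profile \<Rightarrow> (nat \<Rightarrow> nat)" where "F = (\<lambda>q. if q \<in> A then \<tau> else id)"
  have spf: "is_SPF h n F" unfolding is_SPF_def F_def using tperm permutes_id by auto
  have inv1: "act h \<phi> id p \<in> A \<longleftrightarrow> p \<in> A" if "\<phi> \<in> V" "p \<in> profiles h n" for \<phi> p
  proof
    assume "p \<in> A"
    then obtain \<sigma> where s: "\<sigma> \<in> V" "p = act h \<sigma> id p0" unfolding A_def by blast
    then have "act h \<phi> id p = act h (\<phi> \<circ> \<sigma>) id p0" using act_comp Vsub that by blast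
    then show "act h \<phi> id p \<in> A" unfolding A_def using Vmul s that by blast
  next
    assume "act h \<phi> id p \<in> A"
    then obtain \<sigma> where s: "\<sigma> \<in> V" "act h \<phi> id p = act h \<sigma> id p0" unfolding A_def by blast
    have ip: "inv' \<phi> permutes {1..h}" using Vsub[OF that(1)] permutes_inv by blast
    have "p = act h id id p" using act_id that(2) by metis
    also have "\<dots> = act h (inv' \<phi> \<circ> \<phi>) id p"
      using permutes_inv_o(2)[OF Vsub[OF that(1)]] by simp
    also have "\<dots> = act h (inv' \<phi>) id (act h \<phi> id p)"
      using act_comp[OF ip Vsub[OF that(1)]] by simp
    also have "\<dots> = act h (inv' \<phi> \<circ> \<sigma>) id p0"
      using s act_comp[OF ip Vsub[OF s(1)]] by simp
    finally show "p \<in> A" unfolding A_def using Vmul Vinv that s by blast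
  qed
  have "anonymity_group_of h n F = V \<times> {id}"
  proof
    show "anonymity_group_of h n F \<subseteq> V \<times> {id}"
    proof
      fix g assume g: "g \<in> anonymity_group_of h n F"
      then obtain \<phi> where g1: "g = (\<phi>, id)" "\<phi> permutes {1..h}"
        and eq: "\<forall>p\<in>profiles h n. F (act h \<phi> id p) = F p"
        unfolding anonymity_group_of_def symmetry_group_def sym_group_carrier by auto
      have "\<one>\<^bsub>sym_group h\<^esub> \<in> V" by (rule subgroup.one_closed[OF assms(3)])
      then have idV: "id \<in> V" by (simp add: sym_group_one)
      have "p0 = act h id id p0" by (rule act_id[OF p0, symmetric])
      then have "p0 \<in> A" unfolding A_def using idV by blast
      then have "F (act h \<phi> id p0) = \<tau>" using eq p0 unfolding F_def by auto
      then have "act h \<phi> id p0 \<in> A" using tne unfolding F_def by (auto split: if_splits)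
      then obtain \<sigma> where s: "\<sigma> \<in> V" "act h \<phi> id p0 = act h \<sigma> id p0" unfolding A_def by blast
      have ip: "inv' \<sigma> permutes {1..h}" using Vsub[OF s(1)] permutes_inv by blast
      have "act h (inv' \<sigma> \<circ> \<phi>) id p0 = act h (inv' \<sigma>) id (act h \<phi> id p0)"
        using act_comp[OF ip g1(2)] by simp
      also have "\<dots> = act h (inv' \<sigma> \<circ> \<sigma>) id p0" using s act_comp[OF ip Vsub[OF s(1)]] by simp
      also have "\<dots> = p0" using permutes_inv_o(2)[OF Vsub[OF s(1)]] act_id[OF p0] by simp
      finally have "(inv' \<sigma> \<circ> \<phi>, id) \<in> Stab h (carrier (sym_group h) \<times> {id}) p0"
        unfolding Stab_def using ip g1(2) by (simp add: sym_group_carrier permutes_compose)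
      then have "inv' \<sigma> \<circ> \<phi> \<in> V" using st by blast
      then have "\<sigma> \<circ> (inv' \<sigma> \<circ> \<phi>) \<in> V" using Vmul s by blast
      moreover have "\<sigma> \<circ> (inv' \<sigma> \<circ> \<phi>) = \<phi>"
        using permutes_inv_o(1)[OF Vsub[OF s(1)]] by (simp add: o_assoc)
      ultimately show "g \<in> V \<times> {id}" using g1 by simp
    qed
  next
    show "V \<times> {id} \<subseteq> anonymity_group_of h n F"
    proof
      fix g :: "(nat \<Rightarrow> nat) \<times> (nat \<Rightarrow> nat)" assume "g \<in> V \<times> {id}"
      then obtain \<phi> where g: "g = (\<phi>, id)" "\<phi> \<in> V" by blast
      have "\<forall>p\<in>profiles h n. F (act h \<phi> id p) = id \<circ> F p"
        using inv1[OF g(2)] unfolding F_def by auto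
      then show "g \<in> anonymity_group_of h n F"
        unfolding anonymity_group_of_def symmetry_group_def using g Vsub[OF g(2)] permutes_id by (auto simp: sym_group_carrier)

    qed
  qed
  then show ?thesis unfolding is_anonymity_group_def using spf by metis
qed

end
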